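(* There is a function $f:(0,\infty)\to[0,1]$ with $\lim_{r\to\infty}r^{c}f(r)=0$ for every $c>0$ such that the following holds. For every common knowledge distinguishing debate game $(A,S,P,C_w,C_l)$ and all positive integers $m,n$ with $|C_l(s)|\le n$ and $|C_w(s)|\ge m$ for all $s\in S$, there is a policy whose error is at most $f(m/n)$.
   Context: Let $\delta$ be a special default action. A CKDDG is a tuple $(A,S,P,C_w,C_l)$ with $A$ finite, $\delta\notin A$, $S$ finite, $P$ a probability mass function on $S$, and $C_w,C_l:S\to\mathcal P(A)$. A policy is $M:\{1,2\}\times(A\cup\{\delta\})^2\to[0,1]$ with $M(1,a_1,a_2)+M(2,a_1,a_2)=1$. For $j\in\{1,2\}$ and $s\in S$, $w^i_M((j,s))$ is the value to agent $i$ of the zero-sum game with payoff matrix $M(i,\cdot,\cdot)$ in which agent $j$ chooses from $C_w(s)\cup\{\delta\}$ and the other agent chooses from $C_l(s)\cup\{\delta\}$. The error is $\mathbb E_{s\sim P}\left[\frac{w^1_M((2,s))+w^2_M((1,s))}{2}\right]$. *)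

theory Defs
  imports "HOL-Probability.Probability"
begin

text \<open>Actions are of type 'a option; the default action delta is None, and an
  action a of A is represented as Some a (so delta is automatically not in A).\<close>

definition delta :: "'a option" where "delta = None"

definition mixed :: "'b set \<Rightarrow> ('b \<Rightarrow> real) set" where
  "mixed X = {x. (\<forall>b. 0 \<le> x b) \<and> (\<forall>b. b \<notin> X \<longrightarrow> x b = 0) \<and> sum x X = 1}"

definition game_value :: "'b set \<Rightarrow> 'c set \<Rightarrow> ('b \<Rightarrow> 'c \<Rightarrow> real) \<Rightarrow> real" where
  "game_value X Y g =
     (SUP x\<in>mixed X. INF y\<in>mixed Y. \<Sum>a\<in>X. \<Sum>b\<in>Y. x a * y b * g a b)"

definition is_policy :: "(nat \<Rightarrow> 'a option \<Rightarrow> 'a option \<Rightarrow> real) \<Rightarrow> bool" where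
  "is_policy M \<longleftrightarrow> (\<forall>i\<in>{1,2}. \<forall>a1 a2. 0 \<le> M i a1 a2 \<and> M i a1 a2 \<le> 1) \<and>
                    (\<forall>a1 a2. M 1 a1 a2 + M 2 a1 a2 = 1)"

text \<open>w^i_M((j,s)): agent j chooses from C_w(s) \<union> {delta}, the other agent from
  C_l(s) \<union> {delta}; value to agent i of the zero-sum game with payoff M(i,.,.).\<close>
definition wval :: "(nat \<Rightarrow> 'a option \<Rightarrow> 'a option \<Rightarrow> real) \<Rightarrow> ('s \<Rightarrow> 'a set) \<Rightarrow>
    ('s \<Rightarrow> 'a set) \<Rightarrow> nat \<Rightarrow> nat \<Rightarrow> 's \<Rightarrow> real" where
  "wval M Cw Cl i j s =
    (let W = Some ` Cw s \<union> {delta}; L = Some ` Cl s \<union> {delta};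
         Xi = (if i = j then W else L); Yo = (if i = j then L else W);
         g = (if i = 1 then (\<lambda>a b. M 1 a b) else (\<lambda>a b. M 2 b a))
     in game_value Xi Yo g)"

definition ckddg_error :: "(nat \<Rightarrow> 'a option \<Rightarrow> 'a option \<Rightarrow> real) \<Rightarrow> 's pmf \<Rightarrow>
    ('s \<Rightarrow> 'a set) \<Rightarrow> ('s \<Rightarrow> 'a set) \<Rightarrow> real" where
  "ckddg_error M P Cw Cl =
     measure_pmf.expectation P (\<lambda>s. (wval M Cw Cl 1 2 s + wval M Cw Cl 2 1 s) / 2)"

definition is_ckddg :: "'a set \<Rightarrow> 's set \<Rightarrow> 's pmf \<Rightarrow> ('s \<Rightarrow> 'a set) \<Rightarrow> ('s \<Rightarrow> 'a set) \<Rightarrow> bool" where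
  "is_ckddg A S P Cw Cl \<longleftrightarrow> finite A \<and> finite S \<and> set_pmf P \<subseteq> S \<and>
     (\<forall>s\<in>S. Cw s \<subseteq> A \<and> Cl s \<subseteq> A)"

end

theory Submission imports Defs "HOL-Real_Asymp.Real_Asymp" begin

type_synonym lbl = "nat \<times> nat list"

definition ZD :: "nat \<Rightarrow> lbl set" where
  "ZD J = {(i,xs). i < J*J \<and> set xs \<subseteq> {..<J*J} \<and> length xs < J}"

definition Rl :: "lbl \<Rightarrow> lbl \<Rightarrow> bool" where "Rl x y \<longleftrightarrow> fst x \<notin> set (snd y)"

fun Vl :: "lbl option \<Rightarrow> lbl option \<Rightarrow> real" where
  "Vl (Some u) (Some v) = (if Rl u v then 1 else 0)"
| "Vl (Some u) None = 1"
| "Vl None _ = 0"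

definition lab :: "(nat \<Rightarrow> lbl option) \<Rightarrow> nat option \<Rightarrow> lbl option" where
  "lab l a = (case a of None \<Rightarrow> None | Some x \<Rightarrow> l x)"

definition Mpol :: "(nat \<Rightarrow> lbl option) \<Rightarrow> nat \<Rightarrow> nat option \<Rightarrow> nat option \<Rightarrow> real" where
  "Mpol l i a1 a2 = (if i = 1 then Vl (lab l a1) (lab l a2) else 1 - Vl (lab l a1) (lab l a2))"

lemma Vl_01: "Vl a b = 0 \<or> Vl a b = 1"
  by (cases a; cases b) auto

lemma Vl_ge0[simp]: "0 \<le> Vl a b" by (cases a; cases b) auto
lemma Vl_le1[simp]: "Vl a b \<le> 1" by (cases a; cases b) auto

lemma Mpol_policy: "is_policy (Mpol l)"
  unfolding is_policy_def Mpol_def by auto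

lemma finite_ZD: "finite (ZD J)"
proof -
  have "ZD J \<subseteq> {..<J*J} \<times> {xs. set xs \<subseteq> {..<J*J} \<and> length xs \<le> J}"
    unfolding ZD_def by auto
  moreover have "finite ({..<J*J} \<times> {xs. set xs \<subseteq> {..<J*J} \<and> length xs \<le> J})"
    by (intro finite_cartesian_product finite_lists_length_le) auto
  ultimately show ?thesis by (rule finite_subset)
qed

lemma ZD_ne: "J \<ge> 1 \<Longrightarrow> (0, []) \<in> ZD J"
  unfolding ZD_def by auto

lemma G1: assumes "T \<subseteq> ZD J" "card T < J"
  shows "\<exists>z\<in>ZD J. \<forall>t\<in>T. \<not> Rl t z"
proof -
  have fT: "finite T" using assms(1) finite_ZD finite_subset by blast
  obtain xs where xs: "set xs = fst ` T" "distinct xs"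
    using finite_distinct_list[of "fst ` T"] fT by auto
  have "length xs = card (fst ` T)" using xs distinct_card by metis
  also have "\<dots> \<le> card T" using fT card_image_le by blast
  finally have "length xs < J" using assms(2) by linarith
  moreover have "set xs \<subseteq> {..<J*J}" using xs(1) assms(1) unfolding ZD_def by auto
  moreover have "J \<ge> 1" using assms(2) by linarith
  ultimately have "(0, xs) \<in> ZD J" unfolding ZD_def by auto
  moreover have "\<forall>t\<in>T. \<not> Rl t (0, xs)" unfolding Rl_def using xs(1) by auto
  ultimately show ?thesis by blast
qed

lemma G2: assumes "T \<subseteq> ZD J" "card T < J"
  shows "\<exists>z\<in>ZD J. \<forall>t\<in>T. Rl z t"
proof -
  have fT: "finite T" using assms(1) finite_ZD finite_subset by blast
  let ?U = "\<Union>t\<in>T. set (snd t)"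
  have "card ?U \<le> (\<Sum>t\<in>T. card (set (snd t)))" by (rule card_UN_le[OF fT])
  also have "\<dots> \<le> (\<Sum>t\<in>T. J - 1)"
  proof (intro sum_mono)
    fix t assume "t \<in> T"
    hence "length (snd t) < J" using assms(1) unfolding ZD_def by auto
    thus "card (set (snd t)) \<le> J - 1" using card_length[of "snd t"] by linarith
  qed
  also have "\<dots> = card T * (J - 1)" by simp
  also have "\<dots> < J * J"
  proof -
    have "card T * (J - 1) \<le> (J - 1) * (J - 1)" using assms(2) by (intro mult_le_mono1) linarith
    also have "\<dots> < J * J" using assms(2) by (intro mult_strict_mono) auto
    finally show ?thesis .
  qed
  finally have c: "card ?U < card {..<J*J}" by simp
  have "\<not> {..<J*J} \<subseteq> ?U"
  proof
    assume "{..<J*J} \<subseteq> ?U"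
    hence "card {..<J*J} \<le> card ?U" by (intro card_mono) (use fT in auto)
    thus False using c by linarith
  qed
  then obtain i where i: "i < J*J" "i \<notin> ?U" by auto
  have "(i, []) \<in> ZD J" using i(1) assms(2) unfolding ZD_def by auto
  moreover have "\<forall>t\<in>T. Rl (i, []) t" unfolding Rl_def using i(2) by auto
  ultimately show ?thesis by blast
qed

lemma point_mixed: "yz \<in> Y \<Longrightarrow> finite Y \<Longrightarrow> (\<lambda>b. if b = yz then 1 else 0 :: real) \<in> mixed Y"
  unfolding mixed_def by auto

lemma gv_le:
  assumes X: "finite X" "xz \<in> X" and Y: "finite Y" "yz \<in> Y"
    and g0: "\<And>a b. 0 \<le> g a b" and gy: "\<And>a. a \<in> X \<Longrightarrow> g a yz \<le> e"
  shows "game_value X Y g \<le> e"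
  unfolding game_value_def
proof (rule cSUP_least)
  show "mixed X \<noteq> {}" using point_mixed[OF X(2,1)] by blast
next
  fix x assume x: "x \<in> mixed X"
  let ?py = "(\<lambda>b. if b = yz then 1 else 0 :: real)"
  have "(INF y\<in>mixed Y. \<Sum>a\<in>X. \<Sum>b\<in>Y. x a * y b * g a b) \<le> (\<Sum>a\<in>X. \<Sum>b\<in>Y. x a * ?py b * g a b)"
  proof (rule cINF_lower)
    show "?py \<in> mixed Y" using point_mixed[OF Y(2,1)] .
    show "bdd_below ((\<lambda>y. \<Sum>a\<in>X. \<Sum>b\<in>Y. x a * y b * g a b) ` mixed Y)"
      unfolding bdd_below_def
      by (rule exI[of _ 0]) (use x g0 in \<open>auto simp: mixed_def intro!: sum_nonneg\<close>)
  qed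
  also have "\<dots> = (\<Sum>a\<in>X. x a * g a yz)"
  proof (intro sum.cong refl)
    fix a assume "a \<in> X"
    have "(\<Sum>b\<in>Y. x a * ?py b * g a b) = (\<Sum>b\<in>Y. if b = yz then x a * g a b else 0)"
      by (intro sum.cong) auto
    also have "\<dots> = x a * g a yz" using Y by (simp add: sum.delta')
    finally show "(\<Sum>b\<in>Y. x a * ?py b * g a b) = x a * g a yz" .
  qed
  also have "\<dots> \<le> (\<Sum>a\<in>X. x a * e)"
    by (intro sum_mono mult_left_mono gy) (use x in \<open>auto simp: mixed_def\<close>)
  also have "\<dots> = e" using x by (simp add: mixed_def flip: sum_distrib_right)
  finally show "(INF y\<in>mixed Y. \<Sum>a\<in>X. \<Sum>b\<in>Y. x a * y b * g a b) \<le> e" .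
qed

lemma wval12: "wval M Cw Cl 1 2 s = game_value (Some ` Cl s \<union> {delta}) (Some ` Cw s \<union> {delta}) (\<lambda>a b. M 1 a b)"
  by (simp add: wval_def Let_def)
lemma wval21: "wval M Cw Cl 2 1 s = game_value (Some ` Cl s \<union> {delta}) (Some ` Cw s \<union> {delta}) (\<lambda>a b. M 2 b a)"
  by (simp add: wval_def Let_def)

definition TL :: "(nat \<Rightarrow> lbl option) \<Rightarrow> nat set \<Rightarrow> lbl set" where
  "TL l L = {z. Some z \<in> l ` L}"

definition good1 :: "(nat \<Rightarrow> lbl option) \<Rightarrow> nat set \<Rightarrow> nat set \<Rightarrow> bool" where
  "good1 l W L \<longleftrightarrow> (\<exists>a\<in>W - L. \<exists>z. l a = Some z \<and> z \<in> {z. \<forall>t\<in>TL l L. \<not> Rl t z})"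
definition good2 :: "(nat \<Rightarrow> lbl option) \<Rightarrow> nat set \<Rightarrow> nat set \<Rightarrow> bool" where
  "good2 l W L \<longleftrightarrow> (\<exists>a\<in>W - L. \<exists>z. l a = Some z \<and> z \<in> {z. \<forall>t\<in>TL l L. Rl z t})"

lemma v1_le:
  assumes fin: "finite (Cw s)" "finite (Cl s)"
  shows "wval (Mpol l) Cw Cl 1 2 s \<le> (if good1 l (Cw s) (Cl s) then 0 else 1)"
proof (cases "good1 l (Cw s) (Cl s)")
  case True
  then obtain a z where a: "a \<in> Cw s" "a \<notin> Cl s" "l a = Some z" "\<forall>t\<in>TL l (Cl s). \<not> Rl t z"
    unfolding good1_def by auto
  have "wval (Mpol l) Cw Cl 1 2 s \<le> 0"
    unfolding wval12
  proof (rule gv_le[where xz = None and yz = "Some a"])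
    fix b assume "b \<in> Some ` Cl s \<union> {delta}"
    then consider "b = None" | c where "b = Some c" "c \<in> Cl s" unfolding delta_def by auto
    then show "Mpol l 1 b (Some a) \<le> 0"
    proof cases
      case 1 then show ?thesis by (simp add: Mpol_def lab_def)
    next
      case 2
      show ?thesis
      proof (cases "l c")
        case None then show ?thesis using 2 by (simp add: Mpol_def lab_def)
      next
        case (Some t)
        hence "t \<in> TL l (Cl s)" using 2 unfolding TL_def by force
        then show ?thesis using 2 Some a by (simp add: Mpol_def lab_def)
      qed
    qed
  qed (use fin a Vl_01 in \<open>auto simp: delta_def Mpol_def\<close>)
  then show ?thesis using True by simp
next
  case False
  have "wval (Mpol l) Cw Cl 1 2 s \<le> 1"
    unfolding wval12
    by (rule gv_le[where xz = None and yz = None]) (use fin Vl_01 in \<open>auto simp: delta_def Mpol_def\<close>)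
  then show ?thesis using False by simp
qed

lemma v2_le:
  assumes fin: "finite (Cw s)" "finite (Cl s)"
  shows "wval (Mpol l) Cw Cl 2 1 s \<le> (if good2 l (Cw s) (Cl s) then 0 else 1)"
proof (cases "good2 l (Cw s) (Cl s)")
  case True
  then obtain a z where a: "a \<in> Cw s" "a \<notin> Cl s" "l a = Some z" "\<forall>t\<in>TL l (Cl s). Rl z t"
    unfolding good2_def by auto
  have "wval (Mpol l) Cw Cl 2 1 s \<le> 0"
    unfolding wval21
  proof (rule gv_le[where xz = None and yz = "Some a"])
    fix b assume "b \<in> Some ` Cl s \<union> {delta}"
    then consider "b = None" | c where "b = Some c" "c \<in> Cl s" unfolding delta_def by auto
    then show "Mpol l 2 (Some a) b \<le> 0"
    proof cases
      case 1 then show ?thesis using a by (simp add: Mpol_def lab_def)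
    next
      case 2
      show ?thesis
      proof (cases "l c")
        case None then show ?thesis using 2 a by (simp add: Mpol_def lab_def)
      next
        case (Some t)
        hence "t \<in> TL l (Cl s)" using 2 unfolding TL_def by force
        then show ?thesis using 2 Some a by (simp add: Mpol_def lab_def)
      qed
    qed
  qed (use fin a Vl_01 in \<open>auto simp: delta_def Mpol_def\<close>)
  then show ?thesis using True by simp
next
  case False
  have "wval (Mpol l) Cw Cl 2 1 s \<le> 1"
    unfolding wval21
    by (rule gv_le[where xz = None and yz = None]) (use fin Vl_01 in \<open>auto simp: delta_def Mpol_def\<close>)
  then show ?thesis using False by simp
qed

definition Qd :: "real \<Rightarrow> nat \<Rightarrow> lbl option pmf" where
  "Qd p J = map_pmf (\<lambda>(b,z). if b then Some z else None) (pair_pmf (bernoulli_pmf p) (pmf_of_set (ZD J)))"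

lemma set_Qd: "J \<ge> 1 \<Longrightarrow> set_pmf (Qd p J) \<subseteq> Some ` ZD J \<union> {None}"
proof -
  assume "J \<ge> 1"
  hence "ZD J \<noteq> {}" using ZD_ne by blast
  thus ?thesis unfolding Qd_def using finite_ZD[of J] by (auto simp: set_pair_pmf split: if_splits)
qed

lemma finite_set_Qd: "J \<ge> 1 \<Longrightarrow> finite (set_pmf (Qd p J))"
  using set_Qd finite_ZD by (meson finite_Un finite_imageI finite.emptyI finite_insert finite_subset)

lemma Qd_some:
  assumes "G \<subseteq> ZD J" "J \<ge> 1" "0 \<le> p" "p \<le> 1"
  shows "measure_pmf.prob (Qd p J) (Some ` G) = p * card G / card (ZD J)"
proof -
  have fG: "finite G" using assms(1) finite_ZD finite_subset by blast
  have pre: "(\<lambda>(b,z). if b then Some z else None) -` (Some ` G) = {True} \<times> G"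
    by (auto split: if_splits)
  have "measure_pmf.prob (Qd p J) (Some ` G) = measure_pmf.prob (pair_pmf (bernoulli_pmf p) (pmf_of_set (ZD J))) ({True} \<times> G)"
    unfolding Qd_def measure_map_pmf pre by (rule refl)
  also have "\<dots> = measure_pmf.prob (bernoulli_pmf p) {True} * measure_pmf.prob (pmf_of_set (ZD J)) G"
    by (rule measure_pmf_prob_product) (use fG in \<open>auto intro: countable_finite\<close>)
  also have "\<dots> = p * (card G / card (ZD J))"
  proof -
    have ne: "ZD J \<noteq> {}" using ZD_ne assms by blast
    have "measure_pmf.prob (pmf_of_set (ZD J)) G = card (ZD J \<inter> G) / card (ZD J)"
      by (rule measure_pmf_of_set[OF ne finite_ZD])
    thus ?thesis using assms by (simp add: measure_pmf_single Int_absorb1)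
  qed
  finally show ?thesis by simp
qed

lemma Qd_notNone:
  assumes "J \<ge> 1" "0 \<le> p" "p \<le> 1"
  shows "measure_pmf.prob (Qd p J) (- {None}) = p"
proof -
  have pre: "(\<lambda>(b,z). if b then Some z else None) -` (- {None}) = {True} \<times> UNIV"
    by (auto split: if_splits)
  have "measure_pmf.prob (Qd p J) (- {None}) = measure_pmf.prob (pair_pmf (bernoulli_pmf p) (pmf_of_set (ZD J))) ({True} \<times> UNIV)"
    unfolding Qd_def measure_map_pmf pre by (rule refl)
  also have "\<dots> = measure_pmf.prob (bernoulli_pmf p) {True} * measure_pmf.prob (pmf_of_set (ZD J)) UNIV"
    by (rule measure_pmf_prob_product) auto
  also have "\<dots> = p"
    using assms by (simp add: measure_pmf_single)
  finally show ?thesis .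
qed

lemma prod_if_const: "finite A \<Longrightarrow> S \<subseteq> A \<Longrightarrow> (\<Prod>x\<in>A. if x \<in> S then c else (1::real)) = c ^ card S"
  by (simp add: prod.If_cases Int_absorb1 Int_absorb2)

lemma prob_fail:
  fixes Gd :: "lbl set \<Rightarrow> lbl set" and n :: nat
  assumes A: "finite A" "W \<subseteq> A" "L \<subseteq> A" "card L \<le> n" "n > 0"
    and t: "0 \<le> t" "t \<le> 1" and J: "J \<ge> 1"
    and Gd: "\<And>T. T \<subseteq> ZD J \<Longrightarrow> card T < J \<Longrightarrow> \<exists>z\<in>ZD J. z \<in> Gd T"
  shows "measure_pmf.prob (Pi_pmf A None (\<lambda>_. Qd (t/n) J))
           {l. \<not>(\<exists>a\<in>W - L. \<exists>z. l a = Some z \<and> z \<in> Gd (TL l L))}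
         \<le> t^J + 2^card (ZD J) * (1 - t/(n * card (ZD J)))^card (W - L)"
proof -
  define p where "p = t / n"
  define Q where "Q = Qd p J"
  define PP where "PP = Pi_pmf A None (\<lambda>_. Q)"
  define d where "d = card (ZD J)"
  define k where "k = card (W - L)"
  have p01: "0 \<le> p" "p \<le> 1" using t A(5) unfolding p_def by (auto simp: field_simps)
  have d0: "d > 0" using finite_ZD ZD_ne J unfolding d_def by (metis card_gt_0_iff empty_iff)
  define Fail where "Fail = {l. \<not>(\<exists>a\<in>W - L. \<exists>z. l a = Some z \<and> z \<in> Gd (TL l L))}"
  define SS where "SS = {S. S \<subseteq> L \<and> card S = J}"
  define ES where "ES = (\<lambda>S. {l::nat \<Rightarrow> lbl option. \<forall>b\<in>S. l b \<noteq> None})"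
  define TT where "TT = {T. T \<subseteq> ZD J \<and> card T < J}"
  define FT where "FT = (\<lambda>T. {l::nat \<Rightarrow> lbl option. \<forall>a\<in>W - L. l a \<notin> Some ` (Gd T \<inter> ZD J)})"
  have fL: "finite L" using A finite_subset by blast
  have fSS: "finite SS" unfolding SS_def using fL by auto
  have fTT: "finite TT" unfolding TT_def using finite_ZD by auto
  have supp: "\<And>l x. l \<in> set_pmf PP \<Longrightarrow> x \<in> A \<Longrightarrow> l x \<in> Some ` ZD J \<union> {None}"
    unfolding PP_def using set_Qd[OF J] A(1) by (auto simp: set_Pi_pmf PiE_dflt_def Q_def)
  have incl: "Fail \<inter> set_pmf PP \<subseteq> (\<Union>S\<in>SS. ES S) \<union> (\<Union>T\<in>TT. FT T)"
  proof
    fix l assume l: "l \<in> Fail \<inter> set_pmf PP"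
    let ?N = "{b\<in>L. l b \<noteq> None}"
    show "l \<in> (\<Union>S\<in>SS. ES S) \<union> (\<Union>T\<in>TT. FT T)"
    proof (cases "J \<le> card ?N")
      case True
      then obtain S where "S \<subseteq> ?N" "card S = J" by (meson obtain_subset_with_card_n)
      hence "S \<in> SS" "l \<in> ES S" unfolding SS_def ES_def by auto
      thus ?thesis by blast
    next
      case False
      let ?T = "TL l L"
      have sub: "?T \<subseteq> (\<lambda>b. the (l b)) ` ?N"
      proof
        fix z assume "z \<in> ?T"
        then obtain b where b: "b \<in> L" "l b = Some z" unfolding TL_def by auto
        hence "b \<in> ?N" "z = the (l b)" by auto
        thus "z \<in> (\<lambda>b. the (l b)) ` ?N" by blast
      qed
      have fN: "finite ?N" using fL by auto
      have "card ?T \<le> card ((\<lambda>b. the (l b)) ` ?N)" by (rule card_mono[OF _ sub]) (use fN in auto)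
      also have "\<dots> \<le> card ?N" by (rule card_image_le[OF fN])
      finally have cT: "card ?T < J" using False by linarith
      have sT: "?T \<subseteq> ZD J" using supp l A(3) unfolding TL_def by force
      have "l \<in> FT ?T" using l unfolding FT_def Fail_def by auto
      moreover have "?T \<in> TT" using cT sT unfolding TT_def by auto
      ultimately show ?thesis by blast
    qed
  qed
  have ES_eq: "measure_pmf.prob PP (ES S) = p ^ J" if S: "S \<in> SS" for S
  proof -
    have SA: "S \<subseteq> A" using S A(3) unfolding SS_def by auto
    have "ES S = Pi A (\<lambda>x. if x \<in> S then - {None} else UNIV)"
      unfolding ES_def Pi_def using SA by auto
    hence "measure_pmf.prob PP (ES S) = (\<Prod>x\<in>A. measure_pmf.prob Q (if x \<in> S then - {None} else UNIV))"
      unfolding PP_def using measure_Pi_pmf_Pi[OF A(1)] by simp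
    also have "\<dots> = (\<Prod>x\<in>A. if x \<in> S then p else 1)"
      by (intro prod.cong refl) (auto simp: Q_def Qd_notNone[OF J p01])
    also have "\<dots> = p ^ card S" by (rule prod_if_const[OF A(1) SA])
    finally show ?thesis using S unfolding SS_def by simp
  qed
  have FT_le: "measure_pmf.prob PP (FT T) \<le> (1 - p / d) ^ k" if T: "T \<in> TT" for T
  proof -
    let ?G = "Gd T \<inter> ZD J"
    have WA: "W - L \<subseteq> A" using A by auto
    have "FT T = Pi A (\<lambda>x. if x \<in> W - L then - (Some ` ?G) else UNIV)"
      unfolding FT_def Pi_def using WA by auto
    hence "measure_pmf.prob PP (FT T) = (\<Prod>x\<in>A. measure_pmf.prob Q (if x \<in> W - L then - (Some ` ?G) else UNIV))"
      unfolding PP_def using measure_Pi_pmf_Pi[OF A(1)] by simp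
    also have "\<dots> = (\<Prod>x\<in>A. if x \<in> W - L then 1 - measure_pmf.prob Q (Some ` ?G) else 1)"
    proof (intro prod.cong refl)
      have "measure_pmf.prob Q (space (measure_pmf Q) - Some ` ?G) = 1 - measure_pmf.prob Q (Some ` ?G)"
        by (rule measure_pmf.prob_compl) simp
      hence "measure_pmf.prob Q (- Some ` ?G) = 1 - measure_pmf.prob Q (Some ` ?G)"
        by (simp add: Compl_eq_Diff_UNIV)
      thus "\<And>x. measure_pmf.prob Q (if x \<in> W - L then - (Some ` ?G) else UNIV) = (if x \<in> W - L then 1 - measure_pmf.prob Q (Some ` ?G) else 1)"
        by simp
    qed
    also have "\<dots> = (1 - measure_pmf.prob Q (Some ` ?G)) ^ k"
      unfolding k_def by (rule prod_if_const[OF A(1) WA])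
    also have "\<dots> \<le> (1 - p / d) ^ k"
    proof (rule power_mono)
      have GZ: "?G \<subseteq> ZD J" by auto
      have qG: "measure_pmf.prob Q (Some ` ?G) = p * card ?G / d"
        unfolding Q_def d_def by (rule Qd_some[OF GZ J p01])
      have "?G \<noteq> {}" using Gd[of T] T unfolding TT_def by auto
      hence "card ?G \<ge> 1" using finite_ZD[of J] by (meson card_0_eq finite_Int less_one not_le)
      hence "p * 1 / d \<le> p * card ?G / d" using p01 d0 by (intro divide_right_mono mult_left_mono) auto
      thus "1 - measure_pmf.prob Q (Some ` ?G) \<le> 1 - p / d" using qG by simp
      have "card ?G \<le> d" unfolding d_def using finite_ZD by (intro card_mono) auto
      hence "p * card ?G / d \<le> p * d / d" using p01 d0 by (intro divide_right_mono mult_left_mono) auto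
      also have "\<dots> \<le> 1" using d0 p01 by simp
      finally show "0 \<le> 1 - measure_pmf.prob Q (Some ` ?G)" using qG by simp
    qed
    finally show ?thesis .
  qed
  have "measure_pmf.prob PP Fail = measure_pmf.prob PP (Fail \<inter> set_pmf PP)"
    by (simp add: measure_Int_set_pmf)
  also have "\<dots> \<le> measure_pmf.prob PP ((\<Union>S\<in>SS. ES S) \<union> (\<Union>T\<in>TT. FT T))"
    by (rule measure_pmf.finite_measure_mono[OF incl]) simp
  also have "\<dots> \<le> measure_pmf.prob PP (\<Union>S\<in>SS. ES S) + measure_pmf.prob PP (\<Union>T\<in>TT. FT T)"
    by (rule measure_subadditive) (auto simp: measure_pmf.emeasure_eq_measure)
  also have "\<dots> \<le> (\<Sum>S\<in>SS. measure_pmf.prob PP (ES S)) + (\<Sum>T\<in>TT. measure_pmf.prob PP (FT T))"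
    by (intro add_mono measure_pmf.finite_measure_subadditive_finite) (auto simp: fSS fTT)
  also have "\<dots> \<le> (\<Sum>S\<in>SS. p ^ J) + (\<Sum>T\<in>TT. (1 - p / d) ^ k)"
    by (intro add_mono sum_mono) (auto simp: ES_eq FT_le)
  also have "\<dots> = card SS * p ^ J + card TT * (1 - p / d) ^ k" by simp
  also have "\<dots> \<le> t ^ J + 2 ^ d * (1 - p / d) ^ k"
  proof (intro add_mono mult_right_mono)
    have "card SS = card L choose J" unfolding SS_def by (rule n_subsets[OF fL])
    have "real (card SS) * p ^ J \<le> real n ^ J * p ^ J"
    proof (cases "J \<le> card L")
      case True
      have "card L choose J \<le> card L ^ J" by (rule binomial_le_pow[OF True])
      also have "\<dots> \<le> n ^ J" using A(4) by (rule power_mono) simp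
      finally have "real (card SS) \<le> real n ^ J" using \<open>card SS = card L choose J\<close> by (simp flip: of_nat_power)
      thus ?thesis using p01 by (intro mult_right_mono) auto
    next
      case False
      hence "card SS = 0" using \<open>card SS = card L choose J\<close> by simp
      thus ?thesis using p01 by simp
    qed
    also have "\<dots> = t ^ J" unfolding p_def using A(5) by (simp add: power_divide)
    finally show "real (card SS) * p ^ J \<le> t ^ J" .
    have "TT \<subseteq> Pow (ZD J)" unfolding TT_def by auto
    hence "card TT \<le> card (Pow (ZD J))" using finite_ZD by (intro card_mono) auto
    also have "\<dots> = 2 ^ d" unfolding d_def using finite_ZD by (simp add: card_Pow)
    finally show "real (card TT) \<le> 2 ^ d" by (simp flip: of_nat_power)
    show "0 \<le> (1 - p / d) ^ k" using p01 d0 by (intro zero_le_power) (auto simp: field_simps)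
  qed
  finally show ?thesis unfolding Fail_def PP_def Q_def p_def d_def k_def by (simp add: field_simps)
qed


lemma prob_good1:
  fixes n :: nat
  assumes "finite A" "W \<subseteq> A" "L \<subseteq> A" "card L \<le> n" "n>0" "0\<le>t" "t\<le>1" "J\<ge>1"
  shows "measure_pmf.prob (Pi_pmf A None (\<lambda>_. Qd (t/n) J)) {l. \<not> good1 l W L} \<le> t^J + 2^card (ZD J) * (1 - t/(n * card (ZD J)))^card (W - L)"
  unfolding good1_def
  apply (rule prob_fail)
  using assms apply auto
  using G1 apply auto
  done

lemma prob_good2:
  fixes n :: nat
  assumes "finite A" "W \<subseteq> A" "L \<subseteq> A" "card L \<le> n" "n>0" "0\<le>t" "t\<le>1" "J\<ge>1"
  shows "measure_pmf.prob (Pi_pmf A None (\<lambda>_. Qd (t/n) J)) {l. \<not> good2 l W L} \<le> t^J + 2^card (ZD J) * (1 - t/(n * card (ZD J)))^card (W - L)"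
  unfolding good2_def
  apply (rule prob_fail)
  using assms apply auto
  using G2 apply auto
  done

lemma exists_le_expectation:
  fixes X :: "'x \<Rightarrow> real"
  assumes fin: "finite (set_pmf M)" and E: "measure_pmf.expectation M X \<le> b"
  shows "\<exists>x\<in>set_pmf M. X x \<le> b"
proof (rule ccontr)
  assume "\<not> ?thesis"
  hence gt: "\<And>x. x \<in> set_pmf M \<Longrightarrow> b < X x" by auto
  have "measure_pmf.expectation M X = (\<Sum>x\<in>set_pmf M. X x * pmf M x)"
    by (rule integral_measure_pmf_real[OF fin]) (auto simp: set_pmf_eq)
  also have "\<dots> > (\<Sum>x\<in>set_pmf M. b * pmf M x)"
    by (rule sum_strict_mono[OF fin set_pmf_not_empty]) (auto intro: mult_strict_right_mono gt pmf_positive)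
  also have "(\<Sum>x\<in>set_pmf M. b * pmf M x) = b"
    using sum_pmf_eq_1[OF fin subset_refl] by (simp flip: sum_distrib_left)
  finally show False using E by simp
qed

lemma core:
  fixes A S :: "nat set" and P :: "nat pmf" and m n J :: nat
  assumes G: "is_ckddg A S P Cw Cl" and mn: "0 < m" "0 < n" "\<forall>s\<in>S. card (Cl s) \<le> n \<and> m \<le> card (Cw s)"
    and t: "0 \<le> t" "t \<le> 1" and J: "J \<ge> 1"
  shows "\<exists>M. is_policy M \<and> ckddg_error M P Cw Cl \<le> 1 \<and>
     ckddg_error M P Cw Cl \<le> t^J + 2^card (ZD J) * (1 - t/(n * card (ZD J)))^(m - n)"
proof -
  define Q where "Q = Qd (t/n) J"
  define PP where "PP = Pi_pmf A None (\<lambda>_. Q)"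
  define b where "b = t^J + 2^card (ZD J) * (1 - t/(n * card (ZD J)))^(m - n)"
  define ind1 where "ind1 = (\<lambda>l s. if good1 l (Cw s) (Cl s) then 0 else 1::real)"
  define ind2 where "ind2 = (\<lambda>l s. if good2 l (Cw s) (Cl s) then 0 else 1::real)"
  define X where "X = (\<lambda>l. \<Sum>s\<in>S. pmf P s * ((ind1 l s + ind2 l s) / 2))"
  have fA: "finite A" and fS: "finite S" and PS: "set_pmf P \<subseteq> S" and CA: "\<And>s. s \<in> S \<Longrightarrow> Cw s \<subseteq> A \<and> Cl s \<subseteq> A"
    using G unfolding is_ckddg_def by auto
  have d0: "card (ZD J) > 0" using finite_ZD ZD_ne J by (metis card_gt_0_iff empty_iff)
  have finPP: "finite (set_pmf PP)"
    unfolding PP_def Q_def using fA finite_set_Qd[OF J] by (subst set_Pi_pmf[OF fA]) (intro finite_PiE_dflt, auto)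
  have int: "integrable (measure_pmf PP) f" for f :: "_ \<Rightarrow> real"
    by (rule integrable_measure_pmf_finite[OF finPP])
  have base: "(1 - t/(n * card (ZD J)))^card (Cw s - Cl s) \<le> (1 - t/(n * card (ZD J)))^(m - n)" if s: "s \<in> S" for s
  proof (rule power_decreasing)
    have "m - n \<le> card (Cw s) - card (Cl s)" using mn(3) s by auto
    also have "\<dots> \<le> card (Cw s - Cl s)" by (rule diff_card_le_card_Diff) (use CA[OF s] fA finite_subset in blast)
    finally show "m - n \<le> card (Cw s - Cl s)" .
    have "t / (n * card (ZD J)) \<le> 1"
    proof -
      have "1 \<le> n * card (ZD J)" using mn(2) d0 by (simp add: Suc_le_eq)
      hence "(1::real) \<le> real (n * card (ZD J))" by linarith
      thus ?thesis using t by (simp add: divide_le_eq_1)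
    qed
    thus "0 \<le> 1 - t / (n * card (ZD J))" by simp
    show "1 - t / (n * card (ZD J)) \<le> 1" using t by simp
  qed
  have p1: "measure_pmf.expectation PP (\<lambda>l. ind1 l s) \<le> b" if s: "s \<in> S" for s
  proof -
    have "measure_pmf.expectation PP (\<lambda>l. ind1 l s) = measure_pmf.prob PP {l. \<not> good1 l (Cw s) (Cl s)}"
    proof -
      have "(\<lambda>l. ind1 l s) = indicator {l. \<not> good1 l (Cw s) (Cl s)}"
        by (auto simp: ind1_def indicator_def fun_eq_iff)
      thus ?thesis by simp
    qed
    also have "\<dots> \<le> t^J + 2^card (ZD J) * (1 - t/(n * card (ZD J)))^card (Cw s - Cl s)"
    proof -
      have WA: "Cw s \<subseteq> A" and LA: "Cl s \<subseteq> A" using CA[OF s] by auto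
      have cL: "card (Cl s) \<le> n" using mn(3) s by auto
      show ?thesis unfolding PP_def Q_def by (rule prob_good1[OF fA WA LA cL mn(2) t J])
    qed
    also have "\<dots> \<le> b" unfolding b_def using base[OF s] by simp
    finally show ?thesis .
  qed
  have p2: "measure_pmf.expectation PP (\<lambda>l. ind2 l s) \<le> b" if s: "s \<in> S" for s
  proof -
    have "measure_pmf.expectation PP (\<lambda>l. ind2 l s) = measure_pmf.prob PP {l. \<not> good2 l (Cw s) (Cl s)}"
    proof -
      have "(\<lambda>l. ind2 l s) = indicator {l. \<not> good2 l (Cw s) (Cl s)}"
        by (auto simp: ind2_def indicator_def fun_eq_iff)
      thus ?thesis by simp
    qed
    also have "\<dots> \<le> t^J + 2^card (ZD J) * (1 - t/(n * card (ZD J)))^card (Cw s - Cl s)"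
    proof -
      have WA: "Cw s \<subseteq> A" and LA: "Cl s \<subseteq> A" using CA[OF s] by auto
      have cL: "card (Cl s) \<le> n" using mn(3) s by auto
      show ?thesis unfolding PP_def Q_def by (rule prob_good2[OF fA WA LA cL mn(2) t J])
    qed
    also have "\<dots> \<le> b" unfolding b_def using base[OF s] by simp
    finally show ?thesis .
  qed
  have "measure_pmf.expectation PP X = (\<Sum>s\<in>S. pmf P s * ((measure_pmf.expectation PP (\<lambda>l. ind1 l s) + measure_pmf.expectation PP (\<lambda>l. ind2 l s)) / 2))"
    unfolding X_def
    by (subst Bochner_Integration.integral_sum)
       (simp_all only: int integral_mult_right_zero integral_divide_zero Bochner_Integration.integral_add)
  also have "\<dots> \<le> (\<Sum>s\<in>S. pmf P s * b)"
  proof (intro sum_mono mult_left_mono)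
    fix s assume s: "s \<in> S"
    show "(measure_pmf.expectation PP (\<lambda>l. ind1 l s) + measure_pmf.expectation PP (\<lambda>l. ind2 l s)) / 2 \<le> b"
      using add_mono[OF p1[OF s] p2[OF s]] by (simp add: field_simps)
  qed simp
  also have "\<dots> = b" using sum_pmf_eq_1[OF fS PS] by (simp flip: sum_distrib_right)
  finally obtain l where l: "X l \<le> b" using exists_le_expectation[OF finPP] by blast
  have err: "ckddg_error (Mpol l) P Cw Cl = (\<Sum>s\<in>S. ((wval (Mpol l) Cw Cl 1 2 s + wval (Mpol l) Cw Cl 2 1 s) / 2) * pmf P s)"
    unfolding ckddg_error_def by (rule integral_measure_pmf_real[OF fS]) (use PS in auto)
  have vb: "(wval (Mpol l) Cw Cl 1 2 s + wval (Mpol l) Cw Cl 2 1 s) / 2 \<le> (ind1 l s + ind2 l s) / 2" if s: "s \<in> S" for s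
  proof -
    have f1: "finite (Cw s)" using CA[OF s] fA finite_subset by blast
    have f2: "finite (Cl s)" using CA[OF s] fA finite_subset by blast
    have "wval (Mpol l) Cw Cl 1 2 s \<le> ind1 l s"
      unfolding ind1_def by (rule v1_le[where Cw=Cw and Cl=Cl and s=s and l=l, OF f1 f2])
    moreover have "wval (Mpol l) Cw Cl 2 1 s \<le> ind2 l s"
      unfolding ind2_def by (rule v2_le[where Cw=Cw and Cl=Cl and s=s and l=l, OF f1 f2])
    ultimately show ?thesis by simp
  qed
  have "ckddg_error (Mpol l) P Cw Cl \<le> X l"
    unfolding err X_def
  proof (intro sum_mono)
    fix s assume s: "s \<in> S"
    show "(wval (Mpol l) Cw Cl 1 2 s + wval (Mpol l) Cw Cl 2 1 s) / 2 * pmf P s \<le> pmf P s * ((ind1 l s + ind2 l s) / 2)"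
      using mult_right_mono[OF vb[OF s] pmf_nonneg[of P s]] by (simp add: mult.commute)
  qed
  also have "\<dots> \<le> b" by (rule l)
  finally have e1: "ckddg_error (Mpol l) P Cw Cl \<le> b" .
  have "ckddg_error (Mpol l) P Cw Cl \<le> (\<Sum>s\<in>S. 1 * pmf P s)"
    unfolding err
  proof (intro sum_mono mult_right_mono)
    fix s assume s: "s \<in> S"
    have "(ind1 l s + ind2 l s) / 2 \<le> 1" unfolding ind1_def ind2_def by auto
    thus "(wval (Mpol l) Cw Cl 1 2 s + wval (Mpol l) Cw Cl 2 1 s) / 2 \<le> 1" using vb[OF s] by linarith
  qed auto
  also have "\<dots> = 1" using sum_pmf_eq_1[OF fS PS] by simp
  finally have e2: "ckddg_error (Mpol l) P Cw Cl \<le> 1" .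
  show ?thesis using e1 e2 Mpol_policy unfolding b_def by blast
qed

definition tt :: "real \<Rightarrow> real" where "tt r = min 1 (1 / sqrt r)"
definition Bd :: "nat \<Rightarrow> real \<Rightarrow> real" where
  "Bd J r = tt r ^ J + 2 ^ card (ZD J) * exp (- tt r * (r - 1) / card (ZD J))"
definition ff :: "real \<Rightarrow> real" where
  "ff r = min 1 (Min ((\<lambda>J. Bd J r) ` {1..nat \<lceil>r\<rceil> + 1}))"

lemma tt_bounds: "r > 0 \<Longrightarrow> 0 \<le> tt r \<and> tt r \<le> 1"
  unfolding tt_def by auto

lemma Bd_nonneg: "r > 0 \<Longrightarrow> 0 \<le> Bd J r"
  unfolding Bd_def using tt_bounds[of r] by (intro add_nonneg_nonneg mult_nonneg_nonneg) auto

lemma ff_bounds: "r > 0 \<Longrightarrow> 0 \<le> ff r \<and> ff r \<le> 1"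
proof -
  assume r: "r > 0"
  have fin: "finite ((\<lambda>J. Bd J r) ` {1..nat \<lceil>r\<rceil> + 1})" "(\<lambda>J. Bd J r) ` {1..nat \<lceil>r\<rceil> + 1} \<noteq> {}" by auto
  have "Min ((\<lambda>J. Bd J r) ` {1..nat \<lceil>r\<rceil> + 1}) \<in> (\<lambda>J. Bd J r) ` {1..nat \<lceil>r\<rceil> + 1}"
    by (rule Min_in[OF fin])
  hence "0 \<le> Min ((\<lambda>J. Bd J r) ` {1..nat \<lceil>r\<rceil> + 1})" using Bd_nonneg[OF r] by auto
  thus ?thesis unfolding ff_def by auto
qed

lemma ff_le_Bd: "r \<ge> 1 \<Longrightarrow> 1 \<le> J \<Longrightarrow> real J \<le> r \<Longrightarrow> ff r \<le> Bd J r"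
proof -
  assume r: "r \<ge> 1" and J: "1 \<le> J" "real J \<le> r"
  have "J \<le> nat \<lceil>r\<rceil> + 1" using J by linarith
  hence "J \<in> {1..nat \<lceil>r\<rceil> + 1}" using J by auto
  hence "Min ((\<lambda>J. Bd J r) ` {1..nat \<lceil>r\<rceil> + 1}) \<le> Bd J r" by (intro Min_le) auto
  thus ?thesis unfolding ff_def by linarith
qed

lemma asym_exp: "c > 0 \<Longrightarrow> d > (0::real) \<Longrightarrow> ((\<lambda>r::real. r powr c * exp (-(1/sqrt r)*(r-1)/d)) \<longlongrightarrow> 0) at_top"
  by real_asymp

lemma pow_sqrt: "r > 0 \<Longrightarrow> r powr c * (1 / sqrt r) ^ J = r powr (c - real J / 2)"
proof -
  assume r: "r > 0"
  have "1 / sqrt r = r powr (- (1/2))"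
    using r by (simp add: powr_minus_divide powr_half_sqrt)
  hence "(1 / sqrt r) ^ J = r powr (real J * (- (1/2)))"
    using r by (simp add: powr_power)
  thus ?thesis by (simp add: powr_add[symmetric] field_simps)
qed

lemma ff_limit: "c > 0 \<Longrightarrow> ((\<lambda>r. r powr c * ff r) \<longlongrightarrow> 0) at_top"
proof -
  assume c: "c > 0"
  define J0 where "J0 = nat \<lceil>2 * c\<rceil> + 1"
  define D where "D = real (card (ZD J0))"
  have J0: "1 \<le> J0" "2 * c < real J0" unfolding J0_def by linarith+
  have D0: "D > 0" unfolding D_def using finite_ZD ZD_ne[OF J0(1)] by (metis card_gt_0_iff empty_iff of_nat_0_less_iff)
  define U where "U = (\<lambda>r::real. r powr (c - real J0 / 2) + 2 ^ card (ZD J0) * (r powr c * exp (-(1/sqrt r)*(r-1)/D)))"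
  have U: "(U \<longlongrightarrow> 0) at_top"
  proof -
    have "((\<lambda>r::real. r powr (c - real J0 / 2)) \<longlongrightarrow> 0) at_top"
      by (rule tendsto_neg_powr[OF _ filterlim_ident]) (use J0 in linarith)
    moreover have "((\<lambda>r::real. 2 ^ card (ZD J0) * (r powr c * exp (-(1/sqrt r)*(r-1)/D))) \<longlongrightarrow> 0) at_top"
      by (rule tendsto_mult_right_zero[OF asym_exp[OF c D0]])
    ultimately show ?thesis unfolding U_def by (rule tendsto_add_zero)
  qed
  show ?thesis
  proof (rule tendsto_sandwich[OF _ _ tendsto_const U])
    show "\<forall>\<^sub>F r in at_top. 0 \<le> r powr c * ff r"
      using eventually_gt_at_top[of 0] by eventually_elim (use ff_bounds in auto)
    show "\<forall>\<^sub>F r in at_top. r powr c * ff r \<le> U r"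
      using eventually_ge_at_top[of "max 1 (real J0)"]
    proof eventually_elim
      case (elim r)
      hence r: "r \<ge> 1" "real J0 \<le> r" by auto
      have tt: "tt r = 1 / sqrt r" unfolding tt_def using r by auto
      have "r powr c * ff r \<le> r powr c * Bd J0 r"
        by (intro mult_left_mono ff_le_Bd) (use r J0 in auto)
      also have "\<dots> = U r"
        unfolding Bd_def U_def tt D_def using r pow_sqrt[of r c J0]
        by (simp add: distrib_left)
      finally show ?case .
    qed
  qed
qed

lemma err_bound:
  fixes m n J :: nat and t r :: real
  assumes mn: "0 < m" "0 < n" and t: "0 \<le> t" "t \<le> 1" and J: "J \<ge> 1" and r: "r = real m / real n"
  shows "t^J + 2^card (ZD J) * (1 - t/(n * card (ZD J)))^(m - n) \<le> t^J + 2^card (ZD J) * exp (- t * (r - 1) / card (ZD J))"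
proof -
  define d where "d = real (card (ZD J))"
  have d0: "d > 0" unfolding d_def using finite_ZD ZD_ne[OF J] by (metis card_gt_0_iff empty_iff of_nat_0_less_iff)
  define x where "x = t / (n * d)"
  have x: "0 \<le> x" "x \<le> 1"
  proof -
    show "0 \<le> x" unfolding x_def using t d0 by simp
    have c0: "0 < card (ZD J)" using finite_ZD ZD_ne[OF J] by (metis card_gt_0_iff empty_iff)
    have "(1::nat) \<le> n * card (ZD J)" using mn(2) c0 by (simp add: Suc_le_eq)
    hence "real 1 \<le> real (n * card (ZD J))" by (rule of_nat_mono)
    hence "1 \<le> real n * d" unfolding d_def by simp
    thus "x \<le> 1" unfolding x_def using t by (simp add: divide_le_eq_1)
  qed
  have "(1 - x) ^ (m - n) \<le> exp (- x) ^ (m - n)"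
    by (rule power_mono) (use exp_ge_add_one_self[of "-x"] x in auto)
  also have "\<dots> = exp (- x * real (m - n))" by (simp add: exp_of_nat_mult[symmetric] mult.commute)
  also have "\<dots> \<le> exp (- t * (r - 1) / d)"
  proof (cases "n \<le> m")
    case True
    have "- x * real (m - n) = - t * (r - 1) / d"
      unfolding x_def r using True mn d0 by (simp add: of_nat_diff field_simps)
    thus ?thesis by simp
  next
    case False
    hence "r < 1" unfolding r using mn by (simp add: divide_less_eq)
    hence "t * (r - 1) \<le> 0" using t by (intro mult_nonneg_nonpos) auto
    hence "0 \<le> - t * (r - 1) / d" using d0 by (intro divide_nonneg_pos) auto
    thus ?thesis using False by simp
  qed
  finally have "(1 - x) ^ (m - n) \<le> exp (- t * (r - 1) / d)" .
  moreover have "t / real (n * card (ZD J)) = x" unfolding x_def d_def by simp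
  ultimately show ?thesis unfolding d_def by simp
qed

theorem corollary5p2:
  "\<exists>f :: real \<Rightarrow> real.
     (\<forall>r>0. 0 \<le> f r \<and> f r \<le> 1) \<and>
     (\<forall>c>0. ((\<lambda>r. r powr c * f r) \<longlongrightarrow> 0) at_top) \<and>
     (\<forall>(A :: nat set) (S :: nat set) (P :: nat pmf) Cw Cl (m :: nat) (n :: nat).
        is_ckddg A S P Cw Cl \<and> 0 < m \<and> 0 < n \<and>
        (\<forall>s\<in>S. card (Cl s) \<le> n \<and> m \<le> card (Cw s)) \<longrightarrow>
        (\<exists>M. is_policy M \<and> ckddg_error M P Cw Cl \<le> f (real m / real n)))"
proof (intro exI[of _ ff] conjI allI impI)
  show "\<And>r. 0 < r \<Longrightarrow> 0 \<le> ff r" using ff_bounds by blast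
  show "\<And>r. 0 < r \<Longrightarrow> ff r \<le> 1" using ff_bounds by blast
  show "\<And>c. 0 < c \<Longrightarrow> ((\<lambda>r. r powr c * ff r) \<longlongrightarrow> 0) at_top" by (rule ff_limit)
  fix A S :: "nat set" and P :: "nat pmf" and Cw Cl :: "nat \<Rightarrow> nat set" and m n :: nat
  assume H: "is_ckddg A S P Cw Cl \<and> 0 < m \<and> 0 < n \<and> (\<forall>s\<in>S. card (Cl s) \<le> n \<and> m \<le> card (Cw s))"
  define r where "r = real m / real n"
  have r0: "r > 0" unfolding r_def using H by auto
  have fin: "finite ((\<lambda>J. Bd J r) ` {1..nat \<lceil>r\<rceil> + 1})" "(\<lambda>J. Bd J r) ` {1..nat \<lceil>r\<rceil> + 1} \<noteq> {}" by auto
  have "Min ((\<lambda>J. Bd J r) ` {1..nat \<lceil>r\<rceil> + 1}) \<in> (\<lambda>J. Bd J r) ` {1..nat \<lceil>r\<rceil> + 1}"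
    by (rule Min_in[OF fin])
  then obtain J where J': "Min ((\<lambda>J. Bd J r) ` {1..nat \<lceil>r\<rceil> + 1}) = Bd J r" "J \<in> {1..nat \<lceil>r\<rceil> + 1}"
    by (rule imageE)
  note J = J'(2) J'(1)
  have J1: "J \<ge> 1" using J(1) by auto
  obtain M where M: "is_policy M" "ckddg_error M P Cw Cl \<le> 1"
      "ckddg_error M P Cw Cl \<le> tt r ^ J + 2^card (ZD J) * (1 - tt r/(n * card (ZD J)))^(m - n)"
    using core[of A S P Cw Cl m n "tt r" J] H tt_bounds[OF r0] J1 by blast
  have "ckddg_error M P Cw Cl \<le> Bd J r"
    using M(3) err_bound[of m n "tt r" J r] H tt_bounds[OF r0] J1 r_def unfolding Bd_def by linarith
  hence "ckddg_error M P Cw Cl \<le> ff r" unfolding ff_def using J(2) M(2) by simp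
  thus "\<exists>M. is_policy M \<and> ckddg_error M P Cw Cl \<le> ff (real m / real n)" using M(1) unfolding r_def by blast
qed

end
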